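(* In the setting described in the context, there is a one-to-one correspondence between complex structures $J$ on $L$ (as defined in the context) and symmetric bilinear forms $\Omega:Q\times Q\to\mathbb{C}$ with positive definite real part, given by assigning to $J$ the form $$\Omega_J(\phi,\phi')=g_J(j_J(\phi),j_J(\phi'))-\mathrm{i}\,[j_J(\phi),\phi'],\qquad\phi,\phi'\in Q.$$ That is, $J\mapsto\Omega_J$ is a bijection from the set of complex structures on $L$ onto the set of symmetric bilinear forms $Q\times Q\to\mathbb{C}$ with positive definite real part.
   Context: $L$ is a finite-dimensional real vector space and $[\cdot,\cdot]:L\times L\to\mathbb{R}$ is a bilinear form such that $\omega(\xi,\xi')=\frac12[\xi,\xi']-\frac12[\xi',\xi]$ is non-degenerate. Set $M=\{\tau\in L:[\xi,\tau]=0\ \forall\xi\in L\}$ and $N=\{\tau\in L:[\tau,\xi]=0\ \forall\xi\in L\}$, and assume $L=M\oplus N$. Let $Q=L/M$ with quotient map $q:L\to Q$; $[\cdot,\cdot]$ descends to $L\times Q\to\mathbb{R}$. A complex structure on $L$ is a linear map $J:L\to L$ with $J^2=-\mathrm{id}$, $\omega(J\xi,J\tau)=\omega(\xi,\tau)$ for all $\xi,\tau$, and such that $g_J(\tau,\xi):=2\omega(\tau,J\xi)$ is positive definite. For such $J$, $j_J:Q\to L$ is the unique linear map with $q\circ j_J=\mathrm{id}_Q$ and $j_J(Q)\subseteq JM$. *)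

theory Defs
  imports "HOL-Analysis.Analysis"
begin

text \<open>L is modelled as a type of class euclidean_space (a finite-dimensional real
vector space; the inner product is never used). The bilinear form [.,.] is B.\<close>

definition omg :: "('a \<Rightarrow> 'a \<Rightarrow> real) \<Rightarrow> 'a \<Rightarrow> 'a \<Rightarrow> real" where
  "omg B x y = B x y / 2 - B y x / 2"

definition Mset :: "('a \<Rightarrow> 'a \<Rightarrow> real) \<Rightarrow> 'a set" where
  "Mset B = {\<tau>. \<forall>\<xi>. B \<xi> \<tau> = 0}"

definition Nset :: "('a \<Rightarrow> 'a \<Rightarrow> real) \<Rightarrow> 'a set" where
  "Nset B = {\<tau>. \<forall>\<xi>. B \<tau> \<xi> = 0}"

definition gJ :: "('a \<Rightarrow> 'a \<Rightarrow> real) \<Rightarrow> ('a \<Rightarrow> 'a) \<Rightarrow> 'a \<Rightarrow> 'a \<Rightarrow> real" where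
  "gJ B J \<tau> \<xi> = 2 * omg B \<tau> (J \<xi>)"

definition complex_structure :: "('a::real_vector \<Rightarrow> 'a \<Rightarrow> real) \<Rightarrow> ('a \<Rightarrow> 'a) \<Rightarrow> bool" where
  "complex_structure B J \<longleftrightarrow> linear J \<and> (\<forall>\<xi>. J (J \<xi>) = - \<xi>)
     \<and> (\<forall>\<xi> \<tau>. omg B (J \<xi>) (J \<tau>) = omg B \<xi> \<tau>)
     \<and> (\<forall>\<tau>. \<tau> \<noteq> 0 \<longrightarrow> gJ B J \<tau> \<tau> > 0)"

text \<open>The quotient Q = L/M is represented through lifts: an element of Q is given by
a representative in L, q x = q y iff x - y \<in> M. jJ B J x is j_J(q x), i.e. the unique
element of J M lying in the class of x.\<close>

definition jJ :: "('a::real_vector \<Rightarrow> 'a \<Rightarrow> real) \<Rightarrow> ('a \<Rightarrow> 'a) \<Rightarrow> 'a \<Rightarrow> 'a" where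
  "jJ B J x = (THE \<eta>. \<eta> \<in> J ` Mset B \<and> x - \<eta> \<in> Mset B)"

definition OmegaJ :: "('a::real_vector \<Rightarrow> 'a \<Rightarrow> real) \<Rightarrow> ('a \<Rightarrow> 'a) \<Rightarrow> 'a \<Rightarrow> 'a \<Rightarrow> complex" where
  "OmegaJ B J x y = complex_of_real (gJ B J (jJ B J x) (jJ B J y))
                    - \<i> * complex_of_real (B (jJ B J x) y)"

text \<open>Symmetric real-bilinear forms Q x Q \<rightarrow> C with positive definite real part,
represented as bilinear forms on L that vanish whenever an argument lies in M
(i.e. that factor through q x q).\<close>

definition admissible_form :: "('a::real_vector \<Rightarrow> 'a \<Rightarrow> real) \<Rightarrow> ('a \<Rightarrow> 'a \<Rightarrow> complex) \<Rightarrow> bool" where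
  "admissible_form B \<Omega> \<longleftrightarrow> bilinear \<Omega>
     \<and> (\<forall>m\<in>Mset B. \<forall>x. \<Omega> m x = 0 \<and> \<Omega> x m = 0)
     \<and> (\<forall>x y. \<Omega> x y = \<Omega> y x)
     \<and> (\<forall>x. x \<notin> Mset B \<longrightarrow> Re (\<Omega> x x) > 0)"

end

theory Submission
  imports Defs
begin


locale sympl =
  fixes B :: "'a::euclidean_space \<Rightarrow> 'a \<Rightarrow> real"
  assumes bil: "bilinear B"
    and nd: "\<forall>\<xi>. (\<forall>\<xi>'. omg B \<xi> \<xi>' = 0) \<longrightarrow> \<xi> = 0"
    and MN: "Mset B \<inter> Nset B = {0}"
    and dec: "\<forall>x. \<exists>m\<in>Mset B. \<exists>n\<in>Nset B. x = m + n"
begin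

abbreviation "M \<equiv> Mset B"
abbreviation "N \<equiv> Nset B"

lemma BM: "m \<in> M \<Longrightarrow> B x m = 0" by (simp add: Mset_def)
lemma BN: "n \<in> N \<Longrightarrow> B n x = 0" by (simp add: Nset_def)

lemma subM: "subspace M"
  unfolding subspace_def Mset_def
  by (auto simp: bilinear_radd[OF bil] bilinear_rmul[OF bil] bilinear_rzero[OF bil])

lemma subN: "subspace N"
  unfolding subspace_def Nset_def
  by (auto simp: bilinear_ladd[OF bil] bilinear_lmul[OF bil] bilinear_lzero[OF bil])

lemma M_add: "x \<in> M \<Longrightarrow> y \<in> M \<Longrightarrow> x + y \<in> M" using subM subspace_add by blast
lemma M_diff: "x \<in> M \<Longrightarrow> y \<in> M \<Longrightarrow> x - y \<in> M" using subM subspace_diff by blast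
lemma M_scale: "x \<in> M \<Longrightarrow> c *\<^sub>R x \<in> M" using subM subspace_mul by blast
lemma M_0: "0 \<in> M" using subM subspace_0 by blast
lemma N_add: "x \<in> N \<Longrightarrow> y \<in> N \<Longrightarrow> x + y \<in> N" using subN subspace_add by blast
lemma N_diff: "x \<in> N \<Longrightarrow> y \<in> N \<Longrightarrow> x - y \<in> N" using subN subspace_diff by blast
lemma N_scale: "x \<in> N \<Longrightarrow> c *\<^sub>R x \<in> N" using subN subspace_mul by blast
lemma N_0: "0 \<in> N" using subN subspace_0 by blast
lemma M_neg: "x \<in> M \<Longrightarrow> - x \<in> M" using subM subspace_neg by blast
lemma N_neg: "x \<in> N \<Longrightarrow> - x \<in> N" using subN subspace_neg by blast

lemma MN0: "x \<in> M \<Longrightarrow> x \<in> N \<Longrightarrow> x = 0" using MN by blast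

lemma omg_bil: "bilinear (omg B)"
  unfolding bilinear_def omg_def
  apply (auto intro!: linearI simp: bilinear_ladd[OF bil] bilinear_lmul[OF bil]
      bilinear_radd[OF bil] bilinear_rmul[OF bil] algebra_simps)
  by (simp_all add: field_simps)

lemma omg_swap: "omg B x y = - omg B y x" by (simp add: omg_def)

lemma omg_nd: "(\<And>y. omg B x y = 0) \<Longrightarrow> x = 0" using nd by blast

lemma omgMM: "x \<in> M \<Longrightarrow> y \<in> M \<Longrightarrow> omg B x y = 0" by (simp add: omg_def BM)

definition pm :: "'a \<Rightarrow> 'a" where "pm x = (SOME m. m \<in> M \<and> x - m \<in> N)"
definition pn :: "'a \<Rightarrow> 'a" where "pn x = x - pm x"

lemma pm_ex: "pm x \<in> M \<and> x - pm x \<in> N"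
proof -
  obtain m n where "m \<in> M" "n \<in> N" "x = m + n" using dec by blast
  then have "\<exists>m. m \<in> M \<and> x - m \<in> N" by (intro exI[of _ m]) auto
  then show ?thesis unfolding pm_def by (rule someI_ex)
qed

lemma pm_M: "pm x \<in> M" and pn_N: "pn x \<in> N" and pm_pn: "pm x + pn x = x"
  using pm_ex by (auto simp: pn_def)

lemma dec_uniq: "m \<in> M \<Longrightarrow> n \<in> N \<Longrightarrow> m' \<in> M \<Longrightarrow> n' \<in> N \<Longrightarrow> m + n = m' + n' \<Longrightarrow> m = m' \<and> n = n'"
proof -
  assume a: "m \<in> M" "n \<in> N" "m' \<in> M" "n' \<in> N" "m + n = m' + n'"
  have "m - m' = n' - n" using a(5) by (simp add: algebra_simps)
  moreover have "m - m' \<in> M" "n' - n \<in> N" using a M_diff N_diff by auto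
  ultimately have "m - m' = 0" using MN0 by metis
  then show ?thesis using a(5) by auto
qed

lemma pm_eq: "m \<in> M \<Longrightarrow> n \<in> N \<Longrightarrow> pm (m + n) = m"
  using dec_uniq[of m n "pm (m+n)" "pn (m+n)"] pm_M pn_N pm_pn by metis
lemma pn_eq: "m \<in> M \<Longrightarrow> n \<in> N \<Longrightarrow> pn (m + n) = n"
  using dec_uniq[of m n "pm (m+n)" "pn (m+n)"] pm_M pn_N pm_pn by metis

lemma pm_M_id: "m \<in> M \<Longrightarrow> pm m = m" using pm_eq[of m 0] N_0 by simp
lemma pn_M: "m \<in> M \<Longrightarrow> pn m = 0" using pn_eq[of m 0] N_0 by simp
lemma pn_N_id: "n \<in> N \<Longrightarrow> pn n = n" using pn_eq[of 0 n] M_0 by simp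
lemma pm_N: "n \<in> N \<Longrightarrow> pm n = 0" using pm_eq[of 0 n] M_0 by simp

lemma pm_lin: "linear pm"
proof (rule linearI)
  fix x y
  have e: "pm x + pm y + (pn x + pn y) = x + y" using pm_pn[of x] pm_pn[of y] by (simp add: algebra_simps)
  have "pm (pm x + pm y + (pn x + pn y)) = pm x + pm y"
    by (rule pm_eq) (simp_all add: M_add N_add pm_M pn_N)
  then show "pm (x + y) = pm x + pm y" by (simp only: e)
next
  fix r x
  have e: "r *\<^sub>R pm x + r *\<^sub>R pn x = r *\<^sub>R x" using pm_pn[of x] by (simp add: scaleR_right_distrib[symmetric])
  have "pm (r *\<^sub>R pm x + r *\<^sub>R pn x) = r *\<^sub>R pm x"
    by (rule pm_eq) (simp_all add: M_scale N_scale pm_M pn_N)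
  then show "pm (r *\<^sub>R x) = r *\<^sub>R pm x" by (simp only: e)
qed

lemma pn_lin: "linear pn"
  unfolding pn_def[abs_def] using pm_lin
  by (intro linearI) (auto simp: linear_add linear_scale algebra_simps)

lemma B_split: "B x y = B (pm x) (pn y)"
proof -
  have "B x y = B (pm x + pn x) (pm y + pn y)" using pm_pn by simp
  also have "\<dots> = B (pm x) (pn y)"
    by (simp add: bilinear_ladd[OF bil] bilinear_radd[OF bil] BM BN pm_M pn_N)
  finally show ?thesis .
qed

lemma omg_rep: assumes "linear \<phi>" shows "\<exists>x. \<forall>y. omg B x y = \<phi> y"
proof -
  define H where "H x = (\<Sum>b\<in>Basis. omg B x b *\<^sub>R b)" for x :: 'a
  have Hy: "H x \<bullet> y = omg B x y" for x y
  proof -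
    have "H x \<bullet> y = (\<Sum>b\<in>Basis. omg B x b * (b \<bullet> y))"
      by (simp add: H_def inner_sum_left)
    also have "\<dots> = (\<Sum>b\<in>Basis. omg B x ((y \<bullet> b) *\<^sub>R b))"
      using bilinear_rmul[OF omg_bil] by (simp add: inner_commute mult.commute)
    also have "\<dots> = omg B x (\<Sum>b\<in>Basis. (y \<bullet> b) *\<^sub>R b)"
      using omg_bil by (simp add: bilinear_def linear_sum)
    finally show ?thesis by (simp add: euclidean_representation)
  qed
  have linH: "linear H"
    unfolding H_def
    by (intro linearI) (auto simp: bilinear_ladd[OF omg_bil] bilinear_lmul[OF omg_bil]
        scaleR_add_left sum.distrib scaleR_sum_right)
  have "inj H"
  proof (rule injI)
    fix x y assume "H x = H y"
    then have "H (x - y) = 0" using linH by (simp add: linear_diff)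
    then have "omg B (x - y) z = 0" for z using Hy[of "x-y" z] by simp
    then show "x = y" using omg_nd[of "x - y"] by simp
  qed
  then have "surj H" using linear_injective_imp_surjective[OF linH] by simp
  define v where "v = (\<Sum>b\<in>Basis. \<phi> b *\<^sub>R b)"
  obtain x where "H x = v" using \<open>surj H\<close> by (metis surjD)
  have "v \<bullet> y = \<phi> y" for y
  proof -
    have "v \<bullet> y = (\<Sum>b\<in>Basis. \<phi> b * (b \<bullet> y))"
      by (simp add: v_def inner_sum_left)
    also have "\<dots> = (\<Sum>b\<in>Basis. \<phi> ((y \<bullet> b) *\<^sub>R b))"
      by (intro sum.cong refl) (simp add: linear_scale[OF assms] inner_commute)
    also have "\<dots> = \<phi> y"
      using linear_sum[OF assms, of "\<lambda>b. (y \<bullet> b) *\<^sub>R b" Basis] by (simp add: euclidean_representation)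
    finally show ?thesis .
  qed
  note vy = this
  show ?thesis
  proof (intro exI[of _ x] allI)
    fix y
    have "omg B x y = H x \<bullet> y" by (rule Hy[symmetric])
    also have "\<dots> = v \<bullet> y" using \<open>H x = v\<close> by (rule arg_cong)
    also have "\<dots> = \<phi> y" by (rule vy)
    finally show "omg B x y = \<phi> y" .
  qed
qed

end


lemma bilinear_cplx:
  fixes f g :: "'a::real_vector \<Rightarrow> 'a \<Rightarrow> real"
  assumes "bilinear f" "bilinear g"
  shows "bilinear (\<lambda>x y. complex_of_real (f x y) - \<i> * complex_of_real (g x y))"
  unfolding bilinear_def
  by (auto intro!: linearI simp: bilinear_ladd[OF assms(1)] bilinear_lmul[OF assms(1)]
      bilinear_radd[OF assms(1)] bilinear_rmul[OF assms(1)]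
      bilinear_ladd[OF assms(2)] bilinear_lmul[OF assms(2)]
      bilinear_radd[OF assms(2)] bilinear_rmul[OF assms(2)] scaleR_conv_of_real algebra_simps)

locale cs = sympl B for B :: "'a::euclidean_space \<Rightarrow> 'a \<Rightarrow> real" +
  fixes J :: "'a \<Rightarrow> 'a"
  assumes csJ: "complex_structure B J"
begin

lemma J_lin: "linear J" and JJ: "J (J x) = - x" and Jomg: "omg B (J x) (J y) = omg B x y"
  and gpos: "t \<noteq> 0 \<Longrightarrow> gJ B J t t > 0"
  using csJ by (auto simp: complex_structure_def)

lemma omgJ1: "omg B (J x) y = - omg B x (J y)"
proof -
  have "omg B (J x) y = omg B (J (J x)) (J y)" by (rule Jomg[symmetric])
  also have "\<dots> = - omg B x (J y)" by (simp add: JJ bilinear_lneg[OF omg_bil])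
  finally show ?thesis .
qed

lemma g_sym: "gJ B J x y = gJ B J y x"
  unfolding gJ_def using omgJ1[of y x] omg_swap[of "J y" x] by simp

lemma g_bil: "bilinear (gJ B J)"
  unfolding bilinear_def gJ_def
  by (auto intro!: linearI simp: bilinear_ladd[OF omg_bil] bilinear_lmul[OF omg_bil]
      bilinear_radd[OF omg_bil] bilinear_rmul[OF omg_bil] linear_add[OF J_lin]
      linear_scale[OF J_lin] algebra_simps)

lemma MJM: "u \<in> M \<Longrightarrow> J u \<in> M \<Longrightarrow> u = 0"
  using gpos[of u] by (force simp: gJ_def omgMM)

lemma NJN: "n \<in> N \<Longrightarrow> J n \<in> N \<Longrightarrow> n = 0"
  using gpos[of n] by (force simp: gJ_def omg_def BN)

lemma JM_dec: "\<exists>u\<in>M. x - J u \<in> M"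
proof -
  define E where "E z = J (pm z) + pm (J (pn z))" for z
  have linE: "linear E"
    unfolding E_def
    by (intro linearI) (simp_all add: linear_add[OF pm_lin] linear_add[OF pn_lin]
        linear_add[OF J_lin] linear_scale[OF pm_lin] linear_scale[OF pn_lin]
        linear_scale[OF J_lin] scaleR_right_distrib)
  have "inj E"
    unfolding linear_injective_0[OF linE]
  proof (intro allI impI)
    fix z assume "E z = 0"
    then have e: "J (pm z) = - pm (J (pn z))" unfolding E_def by (simp add: eq_neg_iff_add_eq_0)
    then have "J (pm z) \<in> M" using pm_M M_neg by simp
    then have p1: "pm z = 0" using MJM pm_M by blast
    then have "pm (J (pn z)) = 0" using e linear_0[OF J_lin] by simp
    then have "J (pn z) \<in> N" using pm_pn[of "J (pn z)"] pn_N by (metis add_0)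
    then have "pn z = 0" using NJN pn_N by blast
    then show "z = 0" using p1 pm_pn[of z] by simp
  qed
  then have "surj E" using linear_injective_imp_surjective[OF linE] by simp
  then obtain z where "x = E z" by (metis surjD)
  then have "x - J (pm z) \<in> M" unfolding E_def using pm_M by simp
  then show ?thesis using pm_M by blast
qed

abbreviation "j \<equiv> jJ B J"

lemma jJ_uniq: "a \<in> J ` M \<Longrightarrow> x - a \<in> M \<Longrightarrow> b \<in> J ` M \<Longrightarrow> x - b \<in> M \<Longrightarrow> a = b"
proof -
  assume a: "a \<in> J ` M" "x - a \<in> M" "b \<in> J ` M" "x - b \<in> M"
  then obtain u v where uv: "u \<in> M" "v \<in> M" "a = J u" "b = J v" by blast
  have "J (u - v) = (x - b) - (x - a)" using uv linear_diff[OF J_lin] by simp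
  also have "\<dots> \<in> M" using a M_diff by blast
  finally have "u - v = 0" using MJM uv M_diff by blast
  then show "a = b" using uv by simp
qed

lemma jJ_prop: "j x \<in> J ` M \<and> x - j x \<in> M"
proof -
  obtain u where u: "u \<in> M" "x - J u \<in> M" using JM_dec by blast
  have "j x = J u" unfolding jJ_def
    by (rule the_equality) (use u jJ_uniq in auto)
  then show ?thesis using u by auto
qed

lemma jJ_eq: "a \<in> J ` M \<Longrightarrow> x - a \<in> M \<Longrightarrow> j x = a"
  using jJ_prop jJ_uniq by blast

lemma JM_add: "a \<in> J ` M \<Longrightarrow> b \<in> J ` M \<Longrightarrow> a + b \<in> J ` M"
proof -
  assume "a \<in> J ` M" "b \<in> J ` M"
  then obtain u v where "u \<in> M" "v \<in> M" "a = J u" "b = J v" by blast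
  then show ?thesis using linear_add[OF J_lin, of u v] M_add by (metis image_eqI)
qed

lemma JM_scale: "a \<in> J ` M \<Longrightarrow> r *\<^sub>R a \<in> J ` M"
proof -
  assume "a \<in> J ` M"
  then obtain u where "u \<in> M" "a = J u" by blast
  then show ?thesis using linear_scale[OF J_lin, of r u] M_scale by (metis image_eqI)
qed

lemma j_lin: "linear j"
proof (rule linearI)
  fix x y
  show "j (x + y) = j x + j y"
  proof (rule jJ_eq)
    show "j x + j y \<in> J ` M" using jJ_prop JM_add by blast
    have "x + y - (j x + j y) = (x - j x) + (y - j y)" by (simp add: algebra_simps)
    then show "x + y - (j x + j y) \<in> M" using jJ_prop M_add by metis
  qed
next
  fix r x
  show "j (r *\<^sub>R x) = r *\<^sub>R j x"
  proof (rule jJ_eq)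
    show "r *\<^sub>R j x \<in> J ` M" using jJ_prop JM_scale by blast
    have "r *\<^sub>R x - r *\<^sub>R j x = r *\<^sub>R (x - j x)" by (simp add: algebra_simps)
    then show "r *\<^sub>R x - r *\<^sub>R j x \<in> M" using jJ_prop M_scale by metis
  qed
qed

lemma j_M: "m \<in> M \<Longrightarrow> j m = 0"
  by (rule jJ_eq) (use M_0 linear_0[OF J_lin] in \<open>auto intro: image_eqI[of 0 J 0]\<close>)

lemma j_JM: "a \<in> J ` M \<Longrightarrow> j a = a"
  by (rule jJ_eq) (auto simp: M_0)

lemma BJJ_sym: "u \<in> M \<Longrightarrow> v \<in> M \<Longrightarrow> B (J u) (J v) = B (J v) (J u)"
  using Jomg[of u v] omgMM[of u v] by (simp add: omg_def)

lemma B_j_sym: "B (j x) y = B (j y) x"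
proof -
  obtain u where u: "u \<in> M" "j x = J u" using jJ_prop by blast
  obtain v where v: "v \<in> M" "j y = J v" using jJ_prop by blast
  have "B (j x) (y - j y) = 0" "B (j y) (x - j x) = 0" using BM jJ_prop by blast+
  then have "B (j x) y = B (j x) (j y)" "B (j y) x = B (j y) (j x)"
    by (simp_all add: bilinear_rsub[OF bil])
  then show ?thesis using u v BJJ_sym by simp
qed

lemma OmegaJ_adm: "admissible_form B (OmegaJ B J)"
  unfolding admissible_form_def
proof (intro conjI ballI allI impI)
  have b1: "bilinear (\<lambda>x y. gJ B J (j x) (j y))"
    unfolding bilinear_def
    by (auto intro!: linearI simp: bilinear_ladd[OF g_bil] bilinear_lmul[OF g_bil]
      bilinear_radd[OF g_bil] bilinear_rmul[OF g_bil] linear_add[OF j_lin] linear_scale[OF j_lin])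
  have b2: "bilinear (\<lambda>x y. B (j x) y)"
    unfolding bilinear_def
    by (auto intro!: linearI simp: bilinear_ladd[OF bil] bilinear_lmul[OF bil]
      bilinear_radd[OF bil] bilinear_rmul[OF bil] linear_add[OF j_lin] linear_scale[OF j_lin])
  show "bilinear (OmegaJ B J)"
    using bilinear_cplx[OF b1 b2] unfolding OmegaJ_def[abs_def] .
next
  fix m x assume "m \<in> M"
  then show "OmegaJ B J m x = 0"
    by (simp add: OmegaJ_def j_M bilinear_lzero[OF g_bil] bilinear_lzero[OF bil])
next
  fix m x assume "m \<in> M"
  then show "OmegaJ B J x m = 0"
    by (simp add: OmegaJ_def j_M bilinear_rzero[OF g_bil] BM)
next
  fix x y show "OmegaJ B J x y = OmegaJ B J y x"
    by (simp add: OmegaJ_def g_sym[of "j x"] B_j_sym[of x])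
next
  fix x assume "x \<notin> M"
  then have "j x \<noteq> 0" using jJ_prop[of x] by auto
  then show "Re (OmegaJ B J x x) > 0" using gpos by (simp add: OmegaJ_def)
qed

end


context sympl begin

lemma OmegaJ_inj:
  assumes c1: "complex_structure B J1" and c2: "complex_structure B J2"
    and eq: "OmegaJ B J1 = OmegaJ B J2"
  shows "J1 = J2"
proof -
  interpret c1: cs B J1 using sympl_axioms c1 by (simp add: cs_def cs_axioms_def)
  interpret c2: cs B J2 using sympl_axioms c2 by (simp add: cs_def cs_axioms_def)
  have E: "OmegaJ B J1 x y = OmegaJ B J2 x y" for x y using eq by simp
  have ImE: "B (jJ B J1 x) y = B (jJ B J2 x) y" for x y
    using arg_cong[OF E[of x y], of Im] by (simp add: OmegaJ_def)
  have ReE: "gJ B J1 (jJ B J1 x) (jJ B J1 y) = gJ B J2 (jJ B J2 x) (jJ B J2 y)" for x y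
    using arg_cong[OF E[of x y], of Re] by (simp add: OmegaJ_def)
  have jeq: "jJ B J1 x = jJ B J2 x" for x
  proof -
    define d where "d = jJ B J1 x - jJ B J2 x"
    have "d \<in> N" unfolding Nset_def d_def using ImE by (simp add: bilinear_lsub[OF bil])
    moreover have "d = (x - jJ B J2 x) - (x - jJ B J1 x)" unfolding d_def by simp
    then have "d \<in> M" using c1.jJ_prop c2.jJ_prop M_diff by metis
    ultimately have "d = 0" using MN0 by blast
    then show ?thesis unfolding d_def by simp
  qed
  have geq: "gJ B J1 (jJ B J1 x) (jJ B J1 y) = gJ B J2 (jJ B J1 x) (jJ B J1 y)" for x y
    using ReE jeq by simp
  have JM1: "J1 (jJ B J1 x) \<in> M" for x
  proof -
    obtain u where "u \<in> M" "jJ B J1 x = J1 u" using c1.jJ_prop by blast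
    then show ?thesis using c1.JJ M_neg by simp
  qed
  have JM2: "J2 (jJ B J1 x) \<in> M" for x
  proof -
    obtain u where "u \<in> M" "jJ B J2 x = J2 u" using c2.jJ_prop by blast
    then show ?thesis using c2.JJ M_neg jeq by simp
  qed
  have onK: "J1 (jJ B J1 x) = J2 (jJ B J1 x)" for x
  proof -
    define k where "k = jJ B J1 x"
    have "omg B (J1 k - J2 k) w = 0" for w
    proof -
      have w: "w = jJ B J1 w + (w - jJ B J1 w)" by simp
      have a: "omg B (J1 k) (jJ B J1 w) = omg B (J2 k) (jJ B J1 w)"
        using c1.omgJ1[of k "jJ B J1 w"] c2.omgJ1[of k "jJ B J1 w"] geq[of x w]
        by (simp add: gJ_def k_def)
      have b: "omg B (J1 k) (w - jJ B J1 w) = 0" "omg B (J2 k) (w - jJ B J1 w) = 0"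
        using omgMM JM1 JM2 c1.jJ_prop unfolding k_def by blast+
      have "omg B (J1 k - J2 k) w = omg B (J1 k - J2 k) (jJ B J1 w) + omg B (J1 k - J2 k) (w - jJ B J1 w)"
        by (simp add: bilinear_rsub[OF omg_bil])
      also have "\<dots> = 0" using a b by (simp add: bilinear_lsub[OF omg_bil])
      finally show ?thesis .
    qed
    then have "J1 k - J2 k = 0" by (rule omg_nd)
    then show ?thesis unfolding k_def by simp
  qed
  have onM: "J1 m = J2 m" if m: "m \<in> M" for m
  proof -
    define u where "u = J1 (- m)"
    have uK: "u \<in> J1 ` M" unfolding u_def using m M_neg by blast
    have "jJ B J1 u = u" using c1.j_JM[OF uK] .
    then have "J2 u = J1 u" using onK[of u] by simp
    also have "J1 u = m" unfolding u_def using c1.JJ by simp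
    finally have "J2 u = m" .
    then have "J2 m = - u" using c2.JJ[of u] by simp
    also have "\<dots> = J1 m" unfolding u_def using linear_neg[OF c1.J_lin] by simp
    finally show ?thesis by simp
  qed
  show ?thesis
  proof
    fix z
    have "z = jJ B J1 z + (z - jJ B J1 z)" by simp
    then have "J1 z = J1 (jJ B J1 z) + J1 (z - jJ B J1 z)" "J2 z = J2 (jJ B J1 z) + J2 (z - jJ B J1 z)"
      using linear_add[OF c1.J_lin] linear_add[OF c2.J_lin] by metis+
    then show "J1 z = J2 z" using onK onM c1.jJ_prop by simp
  qed
qed

end


context sympl begin

lemma repM: assumes lin: "linear \<phi>" and z: "\<forall>m\<in>M. \<phi> m = 0"
  shows "\<exists>x\<in>M. \<forall>y. B x y = \<phi> y"
proof -
  obtain x where x: "\<And>y. omg B x y = \<phi> y" using omg_rep[OF lin] by blast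
  have "B y (pn x) = 0" for y
  proof -
    have "B y (pn x) = B (pm y) (pn x)" using B_split[of y "pn x"] pn_N_id[OF pn_N] by simp
    also have "\<dots> = B (pm y) x" using B_split[of "pm y" x] pm_M_id[OF pm_M] by simp
    also have "\<dots> = 0" using x[of "pm y"] z pm_M by (simp add: omg_def BM)
    finally show ?thesis .
  qed
  then have "pn x \<in> M" by (simp add: Mset_def)
  then have "pn x = 0" using MN0 pn_N by blast
  then have xM: "x \<in> M" using pm_M[of x] pm_pn[of x] by simp
  show ?thesis
  proof (intro bexI[of _ "(1/2) *\<^sub>R x"] allI)
    fix y
    show "B ((1/2) *\<^sub>R x) y = \<phi> y" using x[of y] xM
      by (simp add: omg_def BM bilinear_lmul[OF bil])
  qed (use xM M_scale in auto)
qed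

lemma repN: assumes lin: "linear \<phi>" and z: "\<forall>n\<in>N. \<phi> n = 0"
  shows "\<exists>x\<in>N. \<forall>y. B y x = \<phi> y"
proof -
  obtain x where x: "\<And>y. omg B x y = \<phi> y" using omg_rep[OF lin] by blast
  have "B (pm x) y = 0" for y
  proof -
    have "B (pm x) y = B (pm x) (pn y)" using B_split[of "pm x" y] pm_M_id[OF pm_M] by simp
    also have "\<dots> = B x (pn y)" using B_split[of x "pn y"] pn_N_id[OF pn_N] by simp
    also have "\<dots> = 0" using x[of "pn y"] z pn_N by (simp add: omg_def BN)
    finally show ?thesis .
  qed
  then have "pm x \<in> N" by (simp add: Nset_def)
  then have "pm x = 0" using MN0 pm_M by blast
  then have xN: "x \<in> N" using pn_N[of x] pm_pn[of x] by simp
  show ?thesis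
  proof (intro bexI[of _ "(-1/2) *\<^sub>R x"] allI)
    fix y
    show "B y ((-1/2) *\<^sub>R x) = \<phi> y" using x[of y] xN
      by (simp add: omg_def BN bilinear_rmul[OF bil] bilinear_rneg[OF bil])
  qed (use xN N_scale N_neg in auto)
qed

lemma uniqM: "m1 \<in> M \<Longrightarrow> m2 \<in> M \<Longrightarrow> (\<And>y. B m1 y = B m2 y) \<Longrightarrow> m1 = m2"
proof -
  assume a: "m1 \<in> M" "m2 \<in> M" "\<And>y. B m1 y = B m2 y"
  have "m1 - m2 \<in> N" using a(3) by (simp add: Nset_def bilinear_lsub[OF bil])
  moreover have "m1 - m2 \<in> M" using a M_diff by blast
  ultimately have "m1 - m2 = 0" using MN0 by blast
  then show ?thesis by simp
qed

lemma uniqN: "n1 \<in> N \<Longrightarrow> n2 \<in> N \<Longrightarrow> (\<And>y. B y n1 = B y n2) \<Longrightarrow> n1 = n2"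
proof -
  assume a: "n1 \<in> N" "n2 \<in> N" "\<And>y. B y n1 = B y n2"
  have "n1 - n2 \<in> M" using a(3) by (simp add: Mset_def bilinear_rsub[OF bil])
  moreover have "n1 - n2 \<in> N" using a N_diff by blast
  ultimately have "n1 - n2 = 0" using MN0 by blast
  then show ?thesis by simp
qed

end

locale cons = sympl B for B :: "'a::euclidean_space \<Rightarrow> 'a \<Rightarrow> real" +
  fixes \<Omega> :: "'a \<Rightarrow> 'a \<Rightarrow> complex"
  assumes adm: "admissible_form B \<Omega>"
begin

definition "R x y = Re (\<Omega> x y)"
definition "T x y = Im (\<Omega> x y)"

lemma \<Omega>_bil: "bilinear \<Omega>" and \<Omega>_M: "m \<in> M \<Longrightarrow> \<Omega> m x = 0 \<and> \<Omega> x m = 0"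
  and \<Omega>_sym: "\<Omega> x y = \<Omega> y x" and \<Omega>_pos: "x \<notin> M \<Longrightarrow> Re (\<Omega> x x) > 0"
  using adm by (auto simp: admissible_form_def)

lemma R_bil: "bilinear R" and T_bil: "bilinear T"
  unfolding bilinear_def R_def T_def
  by (auto intro!: linearI simp: bilinear_ladd[OF \<Omega>_bil] bilinear_lmul[OF \<Omega>_bil]
      bilinear_radd[OF \<Omega>_bil] bilinear_rmul[OF \<Omega>_bil])

lemma R_sym: "R x y = R y x" and T_sym: "T x y = T y x"
  unfolding R_def T_def using \<Omega>_sym by auto

lemma RM: "m \<in> M \<Longrightarrow> R m x = 0" "m \<in> M \<Longrightarrow> R x m = 0"
  and TM: "m \<in> M \<Longrightarrow> T m x = 0" "m \<in> M \<Longrightarrow> T x m = 0"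
  unfolding R_def T_def using \<Omega>_M by auto

lemma R_pos: "x \<notin> M \<Longrightarrow> R x x > 0" unfolding R_def using \<Omega>_pos by auto

lemma R_nn: "R x x \<ge> 0" by (cases "x \<in> M") (auto simp: RM dest: R_pos)

lemma R_pn: "R x y = R (pn x) (pn y)"
proof -
  have "R x y = R (pm x + pn x) (pm y + pn y)" using pm_pn by simp
  also have "\<dots> = R (pn x) (pn y)"
    by (simp add: bilinear_ladd[OF R_bil] bilinear_radd[OF R_bil] RM pm_M)
  finally show ?thesis .
qed

lemma T_pn1: "T x y = T (pn x) y"
proof -
  have "T x y = T (pm x + pn x) y" using pm_pn by simp
  also have "\<dots> = T (pn x) y" by (simp add: bilinear_ladd[OF T_bil] TM pm_M)
  finally show ?thesis .
qed

definition "a x = (SOME m. m \<in> M \<and> (\<forall>y. B m y = - T x y))"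
definition "c x = (SOME m. m \<in> M \<and> (\<forall>y. B m y = R x y))"
definition "d x = (SOME n. n \<in> N \<and> (\<forall>y. B y n = x \<bullet> pm y))"

lemma a_prop: "a x \<in> M \<and> (\<forall>y. B (a x) y = - T x y)"
proof -
  have "\<exists>m\<in>M. \<forall>y. B m y = - T x y"
    by (rule repM) (auto intro!: linearI simp: bilinear_radd[OF T_bil] bilinear_rmul[OF T_bil] TM)
  then show ?thesis unfolding a_def Bex_def by (rule someI_ex)
qed

lemma c_prop: "c x \<in> M \<and> (\<forall>y. B (c x) y = R x y)"
proof -
  have "\<exists>m\<in>M. \<forall>y. B m y = R x y"
    by (rule repM) (use R_bil in \<open>auto simp: bilinear_def RM\<close>)
  then show ?thesis unfolding c_def Bex_def by (rule someI_ex)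
qed

lemma d_prop: "d x \<in> N \<and> (\<forall>y. B y (d x) = x \<bullet> pm y)"
proof -
  have "\<exists>n\<in>N. \<forall>y. B y n = x \<bullet> pm y"
    by (rule repN) (auto intro!: linearI simp: linear_add[OF pm_lin] linear_scale[OF pm_lin]
        inner_add_right pm_N)
  then show ?thesis unfolding d_def Bex_def by (rule someI_ex)
qed

lemma a_M: "a x \<in> M" and c_M: "c x \<in> M" and d_N: "d x \<in> N"
  and Ba: "B (a x) y = - T x y" and Bc: "B (c x) y = R x y" and Bd: "B y (d x) = x \<bullet> pm y"
  using a_prop c_prop d_prop by auto

lemma a_lin: "linear a"
  by (intro linearI; rule uniqM)
    (simp_all add: a_M M_add M_scale Ba bilinear_ladd[OF bil] bilinear_lmul[OF bil]
      bilinear_ladd[OF T_bil] bilinear_lmul[OF T_bil])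

lemma c_lin: "linear c"
  by (intro linearI; rule uniqM)
    (simp_all add: c_M M_add M_scale Bc bilinear_ladd[OF bil] bilinear_lmul[OF bil]
      bilinear_ladd[OF R_bil] bilinear_lmul[OF R_bil])

lemma d_lin: "linear d"
  by (intro linearI; rule uniqN)
    (simp_all add: d_N N_add N_scale Bd bilinear_radd[OF bil] bilinear_rmul[OF bil]
      inner_add_left)

lemma c_inj_N: "y1 \<in> N \<Longrightarrow> y2 \<in> N \<Longrightarrow> c y1 = c y2 \<Longrightarrow> y1 = y2"
proof -
  assume a: "y1 \<in> N" "y2 \<in> N" "c y1 = c y2"
  define y where "y = y1 - y2"
  have yN: "y \<in> N" using a N_diff y_def by blast
  have "c y = 0" using a linear_diff[OF c_lin] y_def by simp
  then have "R y y = 0" using Bc[of y y] by (simp add: bilinear_lzero[OF bil])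
  then have "y \<in> M" using R_pos by force
  then have "y = 0" using yN MN0 by blast
  then show ?thesis using y_def by simp
qed

lemma c_surj: "m \<in> M \<Longrightarrow> \<exists>y\<in>N. c y = m"
proof -
  assume m: "m \<in> M"
  define E where "E z = c (pn z) + d (pm z)" for z
  have linE: "linear E"
    unfolding E_def
    by (intro linearI) (simp_all add: linear_add[OF pm_lin] linear_add[OF pn_lin]
        linear_add[OF c_lin] linear_scale[OF pm_lin] linear_scale[OF pn_lin]
        linear_scale[OF c_lin] linear_add[OF d_lin] linear_scale[OF d_lin] scaleR_right_distrib)
  have "inj E"
    unfolding linear_injective_0[OF linE]
  proof (intro allI impI)
    fix z assume "E z = 0"
    then have e: "c (pn z) = - d (pm z)" unfolding E_def by (simp add: eq_neg_iff_add_eq_0)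
    then have "c (pn z) \<in> N" using d_N N_neg by simp
    then have c0: "c (pn z) = 0" using c_M MN0 by blast
    then have "d (pm z) = 0" using e by simp
    then have "pm z \<bullet> pm (pm z) = 0" using Bd[of "pm z" "pm z"] by (simp add: bilinear_rzero[OF bil])
    then have p1: "pm z = 0" using pm_M_id[OF pm_M] by simp
    have "pn z = 0" using c_inj_N[of "pn z" 0] c0 pn_N N_0 linear_0[OF c_lin] by simp
    then show "z = 0" using p1 pm_pn[of z] by simp
  qed
  then have "surj E" using linear_injective_imp_surjective[OF linE] by simp
  then obtain z where z: "m = E z" unfolding surj_def by blast
  have "pm m = c (pn z)" unfolding z E_def by (rule pm_eq) (simp_all add: c_M d_N)
  then show ?thesis using pn_N[of z] pm_M_id[OF m] by (intro bexI[of _ "pn z"]) auto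
qed

definition "cinv m = (SOME y. y \<in> N \<and> c y = m)"

lemma cinv_prop: assumes "m \<in> M" shows "cinv m \<in> N \<and> c (cinv m) = m"
proof -
  have "\<exists>y. y \<in> N \<and> c y = m" using c_surj[OF assms] by blast
  then show ?thesis unfolding cinv_def by (rule someI_ex)
qed

lemma cinv_c: "y \<in> N \<Longrightarrow> cinv (c y) = y"
  using cinv_prop[OF c_M] c_inj_N by blast

definition "jj x = x + a x"
definition "Y z = cinv (pm z - a (pn z))"
definition "Jc z = jj (Y z) - c (pn z)"

lemma jj_lin: "linear jj"
  unfolding jj_def[abs_def]
  by (intro linearI) (simp_all add: linear_add[OF a_lin] linear_scale[OF a_lin] scaleR_right_distrib)

lemma Y_prop: "Y z \<in> N" "c (Y z) = pm z - a (pn z)"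
  unfolding Y_def using cinv_prop[of "pm z - a (pn z)"] pm_M a_M M_diff by auto

lemma z_dec: "z = jj (pn z) + c (Y z)"
  using Y_prop(2)[of z] pm_pn[of z] by (simp add: jj_def algebra_simps)

lemma Y_lin: "linear Y"
proof (rule linearI)
  fix x y
  show "Y (x + y) = Y x + Y y"
    by (rule c_inj_N) (simp_all add: Y_prop N_add linear_add[OF c_lin] linear_add[OF pm_lin]
        linear_add[OF pn_lin] linear_add[OF a_lin] algebra_simps)
next
  fix r x
  show "Y (r *\<^sub>R x) = r *\<^sub>R Y x"
    by (rule c_inj_N) (simp_all add: Y_prop N_scale linear_scale[OF c_lin] linear_scale[OF pm_lin]
        linear_scale[OF pn_lin] linear_scale[OF a_lin] algebra_simps)
qed

lemma Jc_lin: "linear Jc"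
  unfolding Jc_def[abs_def]
  by (intro linearI) (simp_all add: linear_add[OF jj_lin] linear_scale[OF jj_lin]
      linear_add[OF Y_lin] linear_scale[OF Y_lin] linear_add[OF c_lin] linear_scale[OF c_lin]
      linear_add[OF pn_lin] linear_scale[OF pn_lin] algebra_simps)

lemma key: assumes "x \<in> N" "y \<in> N" shows "pn (jj x + c y) = x" "Y (jj x + c y) = y"
  "Jc (jj x + c y) = jj y - c x"
proof -
  have e: "jj x + c y = (a x + c y) + x" by (simp add: jj_def algebra_simps)
  show p: "pn (jj x + c y) = x" unfolding e by (rule pn_eq) (simp_all add: assms a_M c_M M_add)
  have q: "pm (jj x + c y) = a x + c y" unfolding e by (rule pm_eq) (simp_all add: assms a_M c_M M_add)
  show Y: "Y (jj x + c y) = y" unfolding Y_def p q using cinv_c[OF assms(2)] by simp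
  show "Jc (jj x + c y) = jj y - c x" unfolding Jc_def Y p ..
qed

lemma Bform: assumes "x \<in> N" "y \<in> N" shows "B (jj x + c y) w = - T x w + R y w"
  using assms by (simp add: jj_def bilinear_ladd[OF bil] BN Ba Bc)

lemma omgform: assumes "x \<in> N" "y \<in> N" "x' \<in> N" "y' \<in> N"
  shows "omg B (jj x + c y) (jj x' + c y') = (R y x' - R y' x) / 2"
proof -
  have "B (jj x + c y) (jj x' + c y') = - T x (jj x' + c y') + R y (jj x' + c y')"
    by (rule Bform[OF assms(1,2)])
  also have "\<dots> = - T x x' + R y x'"
    by (simp add: jj_def bilinear_radd[OF T_bil] bilinear_radd[OF R_bil] TM RM a_M c_M)
  finally have 1: "B (jj x + c y) (jj x' + c y') = - T x x' + R y x'" .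
  have "B (jj x' + c y') (jj x + c y) = - T x' (jj x + c y) + R y' (jj x + c y)"
    by (rule Bform[OF assms(3,4)])
  also have "\<dots> = - T x' x + R y' x"
    by (simp add: jj_def bilinear_radd[OF T_bil] bilinear_radd[OF R_bil] TM RM a_M c_M)
  finally have 2: "B (jj x' + c y') (jj x + c y) = - T x' x + R y' x" .
  show ?thesis using 1 2 by (simp add: omg_def T_sym[of x x'] field_simps)
qed

lemma Jc_form: "Jc z = jj (Y z) + c (- pn z)"
  by (simp add: Jc_def linear_neg[OF c_lin])

lemma Jc_JJ: "Jc (Jc z) = - z"
proof -
  have "Jc (Jc z) = jj (- pn z) - c (Y z)" unfolding Jc_form[of z] using key(3)[OF Y_prop(1) N_neg[OF pn_N]] by simp
  also have "\<dots> = - (jj (pn z) + c (Y z))" using linear_neg[OF jj_lin] by simp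
  finally show ?thesis using z_dec[of z] by simp
qed

lemma omg_dec: "omg B z w = (R (Y z) (pn w) - R (Y w) (pn z)) / 2"
  using omgform[OF pn_N Y_prop(1) pn_N Y_prop(1), of z z w w] z_dec[of z] z_dec[of w] by simp

lemma Jc_omg: "omg B (Jc z) (Jc w) = omg B z w"
proof -
  have "omg B (Jc z) (Jc w) = (R (- pn z) (Y w) - R (- pn w) (Y z)) / 2"
    unfolding Jc_form using omgform[OF Y_prop(1) N_neg[OF pn_N] Y_prop(1) N_neg[OF pn_N]] by simp
  then show ?thesis unfolding omg_dec
    by (simp add: bilinear_lneg[OF R_bil] R_sym[of "pn z"] R_sym[of "pn w"])
qed

lemma Jc_pos: assumes "t \<noteq> 0" shows "gJ B Jc t t > 0"
proof -
  have "gJ B Jc t t = 2 * ((R (Y t) (Y t) - R (- pn t) (pn t)) / 2)"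
    unfolding gJ_def Jc_form
    using omgform[OF pn_N Y_prop(1) Y_prop(1) N_neg[OF pn_N], of t t t t] z_dec[of t] by simp
  also have "\<dots> = R (Y t) (Y t) + R (pn t) (pn t)" by (simp add: bilinear_lneg[OF R_bil])
  finally have g: "gJ B Jc t t = R (Y t) (Y t) + R (pn t) (pn t)" .
  have "Y t \<noteq> 0 \<or> pn t \<noteq> 0"
  proof (rule ccontr)
    assume "\<not> ?thesis"
    then have "t = jj 0 + c 0" using z_dec[of t] by simp
    then show False using assms linear_0[OF jj_lin] linear_0[OF c_lin] by simp
  qed
  then have "Y t \<notin> M \<or> pn t \<notin> M" using MN0 Y_prop(1) pn_N by blast
  then show ?thesis unfolding g using R_pos R_nn by (meson add_pos_nonneg add_nonneg_pos)
qed

lemma Jc_cs: "complex_structure B Jc"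
  unfolding complex_structure_def using Jc_lin Jc_JJ Jc_omg Jc_pos by auto

lemma Jc_Omega: "OmegaJ B Jc = \<Omega>"
proof -
  interpret cj: cs B Jc using sympl_axioms Jc_cs by (simp add: cs_def cs_axioms_def)
  have jeq: "jJ B Jc u = jj (pn u)" for u
  proof (rule cj.jJ_eq)
    have "Jc (c (pn u)) = jj (pn u)"
      using key(3)[OF N_0 pn_N, of u] linear_0[OF jj_lin] linear_0[OF c_lin] by simp
    then show "jj (pn u) \<in> Jc ` M" by (intro image_eqI[of _ Jc "c (pn u)"]) (simp_all add: c_M)
    have "u - jj (pn u) = pm u - a (pn u)" using pm_pn[of u] by (simp add: jj_def algebra_simps)
    then show "u - jj (pn u) \<in> M" using pm_M a_M M_diff by simp
  qed
  have Jjj: "Jc (jj x) = - c x" if "x \<in> N" for x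
    using key(3)[OF that N_0] linear_0[OF jj_lin] linear_0[OF c_lin] by simp
  show ?thesis
  proof (intro ext)
    fix u v
    have g: "gJ B Jc (jJ B Jc u) (jJ B Jc v) = R u v"
    proof -
      have "gJ B Jc (jJ B Jc u) (jJ B Jc v) = 2 * omg B (jj (pn u) + c 0) (jj 0 + c (- pn v))"
        unfolding gJ_def jeq Jjj[OF pn_N] using linear_0[OF jj_lin] linear_0[OF c_lin]
          linear_neg[OF c_lin] by simp
      also have "\<dots> = R (pn v) (pn u)"
        using omgform[OF pn_N N_0 N_0 N_neg[OF pn_N], of u v]
        by (simp add: bilinear_lneg[OF R_bil] bilinear_lzero[OF R_bil])
      also have "\<dots> = R u v" using R_pn[of u v] R_sym[of "pn v" "pn u"] by simp
      finally show ?thesis .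
    qed
    have b: "B (jJ B Jc u) v = - T u v"
      using Bform[OF pn_N N_0, of u v] unfolding jeq
      using linear_0[OF c_lin] T_pn1[of u v] by (simp add: bilinear_lzero[OF R_bil])
    show "OmegaJ B Jc u v = \<Omega> u v"
      unfolding OmegaJ_def g b by (simp add: complex_eq_iff R_def T_def)
  qed
qed

end

theorem proposition3p3:
  fixes B :: "'a::euclidean_space \<Rightarrow> 'a \<Rightarrow> real"
  assumes "bilinear B"
    and "\<forall>\<xi>. (\<forall>\<xi>'. omg B \<xi> \<xi>' = 0) \<longrightarrow> \<xi> = 0"
    and "Mset B \<inter> Nset B = {0}"
    and "\<forall>x. \<exists>m\<in>Mset B. \<exists>n\<in>Nset B. x = m + n"
  shows "bij_betw (OmegaJ B) {J. complex_structure B J} {\<Omega>. admissible_form B \<Omega>}"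
proof -
  interpret sympl B using assms by (simp add: sympl_def)
  show ?thesis unfolding bij_betw_def
  proof
    show "inj_on (OmegaJ B) {J. complex_structure B J}"
      by (intro inj_onI) (auto intro: OmegaJ_inj)
    show "OmegaJ B ` {J. complex_structure B J} = {\<Omega>. admissible_form B \<Omega>}"
    proof (intro equalityI subsetI)
      fix \<Omega> assume "\<Omega> \<in> OmegaJ B ` {J. complex_structure B J}"
      then obtain J where J: "complex_structure B J" "\<Omega> = OmegaJ B J" by blast
      interpret cj: cs B J using sympl_axioms J(1) by (simp add: cs_def cs_axioms_def)
      show "\<Omega> \<in> {\<Omega>. admissible_form B \<Omega>}" using cj.OmegaJ_adm J(2) by simp
    next
      fix \<Omega> assume "\<Omega> \<in> {\<Omega>. admissible_form B \<Omega>}"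
      then have "admissible_form B \<Omega>" by simp
      then interpret co: cons B \<Omega> using sympl_axioms by (simp add: cons_def cons_axioms_def)
      show "\<Omega> \<in> OmegaJ B ` {J. complex_structure B J}"
        using co.Jc_cs co.Jc_Omega by (metis (mono_tags, lifting) image_eqI mem_Collect_eq)
    qed
  qed
qed

end
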